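(* Fix a prime power $q$ and a real constant $b>0$. Let $m=m(n)$ and $\rho=\rho(n)$ be integer sequences such that $\lim_{n\to\infty} n/m = b$ and $\lim_{n\to\infty}\rho/n = r$. Define $$k(r)=\liminf_{n\to\infty}\frac{\log_{q^m} K_{\mathrm R}(q^m,n,\rho)}{n}.$$ Then for all such $b$ and $r$, $$k(r)=(1-r)(1-br).$$
   Context: For $\mathbf x=(x_0,\dots,x_{n-1})\in\mathrm{GF}(q^m)^n$, the rank $\mathrm{rk}(\mathbf x)$ is the maximum number of coordinates of $\mathbf x$ that are linearly independent over $\mathrm{GF}(q)$; the rank distance is $d_{\mathrm R}(\mathbf x,\mathbf y)=\mathrm{rk}(\mathbf x-\mathbf y)$. The (rank) covering radius of a code $C\subseteq \mathrm{GF}(q^m)^n$ is $\max_{\mathbf x\in\mathrm{GF}(q^m)^n}\min_{\mathbf c\in C} d_{\mathrm R}(\mathbf x,\mathbf c)$. $K_{\mathrm R}(q^m,n,\rho)$ denotes the minimum cardinality of a (linear or nonlinear) code $C\subseteq\mathrm{GF}(q^m)^n$ with rank covering radius $\rho$. *)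

theory Defs
  imports "HOL-Analysis.Analysis" "HOL-Library.Liminf_Limsup"
begin

text \<open>GF(q) is a finite field type 'a.  An element of GF(q^m) is represented by its
coordinate vector in GF(q)^m with respect to a fixed GF(q)-basis (functions
nat => 'a vanishing outside {..<m}); a word in GF(q^m)^n is x :: nat => nat => 'a,
where x j is the j-th coordinate (j < n).  All notions below only use the
GF(q)-vector-space structure of GF(q^m).\<close>

definition words :: "nat \<Rightarrow> nat \<Rightarrow> (nat \<Rightarrow> nat \<Rightarrow> 'a::field) set" where
  "words m n = {x. \<forall>j i. (n \<le> j \<or> m \<le> i) \<longrightarrow> x j i = 0}"

definition coords_indep :: "nat \<Rightarrow> (nat \<Rightarrow> nat \<Rightarrow> 'a::field) \<Rightarrow> nat set \<Rightarrow> bool" where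
  "coords_indep m x S \<longleftrightarrow>
     (\<forall>c :: nat \<Rightarrow> 'a. (\<forall>i<m. (\<Sum>j\<in>S. c j * x j i) = 0) \<longrightarrow> (\<forall>j\<in>S. c j = 0))"

definition rk :: "nat \<Rightarrow> nat \<Rightarrow> (nat \<Rightarrow> nat \<Rightarrow> 'a::field) \<Rightarrow> nat" where
  "rk m n x = Max {card S | S. S \<subseteq> {..<n} \<and> coords_indep m x S}"

definition rank_dist :: "nat \<Rightarrow> nat \<Rightarrow> (nat \<Rightarrow> nat \<Rightarrow> 'a::field) \<Rightarrow> (nat \<Rightarrow> nat \<Rightarrow> 'a) \<Rightarrow> nat" where
  "rank_dist m n x y = rk m n (\<lambda>j i. x j i - y j i)"

definition rank_covers :: "nat \<Rightarrow> nat \<Rightarrow> (nat \<Rightarrow> nat \<Rightarrow> 'a::field) set \<Rightarrow> nat \<Rightarrow> bool" where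
  "rank_covers m n C \<rho> \<longleftrightarrow> (\<forall>x\<in>words m n. \<exists>c\<in>C. rank_dist m n x c \<le> \<rho>)"

definition K_R :: "'a::{field,finite} itself \<Rightarrow> nat \<Rightarrow> nat \<Rightarrow> nat \<Rightarrow> nat" where
  "K_R _ m n \<rho> = (LEAST k. \<exists>C :: (nat \<Rightarrow> nat \<Rightarrow> 'a) set.
       C \<subseteq> words m n \<and> card C = k \<and> rank_covers m n C \<rho>)"

end

theory Submission
  imports Defs
begin


definition fsupp :: "(nat \<times> nat) set \<Rightarrow> (nat \<Rightarrow> nat \<Rightarrow> 'a::zero) set" where
  "fsupp A = {h. \<forall>j i. (j,i) \<notin> A \<longrightarrow> h j i = 0}"

lemma card_fsupp:
  assumes "finite A"
  shows "finite (fsupp A :: (nat \<Rightarrow> nat \<Rightarrow> 'a::{zero,finite}) set)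
    \<and> card (fsupp A :: (nat \<Rightarrow> nat \<Rightarrow> 'a) set) = CARD('a) ^ card A"
proof -
  let ?f = "\<lambda>h::nat \<Rightarrow> nat \<Rightarrow> 'a. \<lambda>p\<in>A. h (fst p) (snd p)"
  let ?g = "\<lambda>g j i. if (j,i) \<in> A then g (j,i) else (0::'a)"
  have bij: "bij_betw ?f (fsupp A :: (nat \<Rightarrow> nat \<Rightarrow> 'a) set) (PiE A (\<lambda>_. UNIV))"
  proof (rule bij_betw_byWitness[where f' = ?g])
    show "\<forall>a\<in>fsupp A. ?g (?f a) = a"
      unfolding fsupp_def by (auto simp: fun_eq_iff)
    show "\<forall>a'\<in>PiE A (\<lambda>_. UNIV). ?f (?g a') = a'"
    proof
      fix a' :: "nat \<times> nat \<Rightarrow> 'a" assume a': "a' \<in> PiE A (\<lambda>_. UNIV)"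
      show "?f (?g a') = a'"
      proof
        fix p show "?f (?g a') p = a' p"
          using a' by (cases p) (auto simp: PiE_def extensional_def)
      qed
    qed
    show "?f ` fsupp A \<subseteq> PiE A (\<lambda>_. UNIV)" by auto
    show "?g ` PiE A (\<lambda>_. UNIV) \<subseteq> fsupp A"
      by (rule image_subsetI) (simp add: fsupp_def)
  qed
  have "finite (PiE A (\<lambda>_. UNIV :: 'a set))" using assms by (simp add: finite_PiE)
  moreover have "card (PiE A (\<lambda>_. UNIV :: 'a set)) = CARD('a) ^ card A"
    using assms by (simp add: card_PiE)
  ultimately show ?thesis using bij_betw_finite[OF bij] bij_betw_same_card[OF bij] by simp
qed

definition vecs :: "nat \<Rightarrow> (nat \<Rightarrow> 'a::zero) set" where
  "vecs m = {v. \<forall>i. m \<le> i \<longrightarrow> v i = 0}"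

lemma card_vecs:
  shows "finite (vecs m :: (nat \<Rightarrow> 'a::{zero,finite}) set)
    \<and> card (vecs m :: (nat \<Rightarrow> 'a) set) = CARD('a) ^ m"
proof -
  let ?f = "\<lambda>h::nat \<Rightarrow> 'a. \<lambda>p\<in>{..<m}. h p"
  let ?g = "\<lambda>g i. if i < m then g i else (0::'a)"
  have bij: "bij_betw ?f (vecs m :: (nat \<Rightarrow> 'a) set) (PiE {..<m} (\<lambda>_. UNIV))"
  proof (rule bij_betw_byWitness[where f' = ?g])
    show "\<forall>a\<in>vecs m. ?g (?f a) = a"
      unfolding vecs_def by (auto simp: fun_eq_iff)
    show "\<forall>a'\<in>PiE {..<m} (\<lambda>_. UNIV). ?f (?g a') = a'"
    proof
      fix a' :: "nat \<Rightarrow> 'a" assume a': "a' \<in> PiE {..<m} (\<lambda>_. UNIV)"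
      show "?f (?g a') = a'"
      proof
        fix p show "?f (?g a') p = a' p"
          using a' by (auto simp: PiE_def extensional_def)
      qed
    qed
    show "?f ` vecs m \<subseteq> PiE {..<m} (\<lambda>_. UNIV)" unfolding image_subset_iff restrict_PiE_iff by simp
    show "?g ` PiE {..<m} (\<lambda>_. UNIV) \<subseteq> vecs m"
      by (rule image_subsetI) (simp add: vecs_def)
  qed
  have "finite (PiE {..<m} (\<lambda>_. UNIV :: 'a set))" by (simp add: finite_PiE)
  moreover have "card (PiE {..<m} (\<lambda>_. UNIV :: 'a set)) = CARD('a) ^ m"
    by (simp add: card_PiE)
  ultimately show ?thesis using bij_betw_finite[OF bij] bij_betw_same_card[OF bij] by simp
qed

lemma words_fsupp: "words m n = fsupp ({..<n} \<times> {..<m})"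
  by (auto simp: words_def fsupp_def not_le)

lemma card_words: "finite (words m n :: (nat \<Rightarrow> nat \<Rightarrow> 'a::{field,finite}) set)
   \<and> card (words m n :: (nat \<Rightarrow> nat \<Rightarrow> 'a) set) = CARD('a) ^ (m * n)"
  using card_fsupp[of "{..<n} \<times> {..<m}", where 'a='a] by (simp add: words_fsupp mult.commute)



lemma hom_solve:
  fixes A :: "nat \<Rightarrow> nat \<Rightarrow> 'a::field"
  shows "finite S \<Longrightarrow> k < card S \<Longrightarrow> \<exists>c. (\<exists>j\<in>S. c j \<noteq> 0) \<and> (\<forall>e<k. (\<Sum>j\<in>S. c j * A e j) = 0)"
proof (induction k arbitrary: S A)
  case 0
  then obtain j where "j \<in> S" by fastforce
  then show ?case by (intro exI[of _ "\<lambda>_. 1"]) auto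
next
  case (Suc k)
  show ?case
  proof (cases "\<forall>j\<in>S. A k j = 0")
    case True
    from Suc.IH[of S A] Suc.prems obtain c where c: "\<exists>j\<in>S. c j \<noteq> 0" "\<forall>e<k. (\<Sum>j\<in>S. c j * A e j) = 0"
      by auto
    have "\<forall>e<Suc k. (\<Sum>j\<in>S. c j * A e j) = 0"
      using c(2) True by (auto simp: less_Suc_eq)
    then show ?thesis using c(1) by blast
  next
    case False
    then obtain j0 where j0: "j0 \<in> S" "A k j0 \<noteq> 0" by blast
    define S' where "S' = S - {j0}"
    define A' where "A' = (\<lambda>e j. A e j - A e j0 * A k j / A k j0)"
    have fS': "finite S'" using Suc.prems by (simp add: S'_def)
    have cS': "k < card S'" using Suc.prems j0 by (simp add: S'_def)
    from Suc.IH[OF fS' cS', of A'] obtain c' where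
      c': "\<exists>j\<in>S'. c' j \<noteq> 0" "\<forall>e<k. (\<Sum>j\<in>S'. c' j * A' e j) = 0" by blast
    define c where "c = c'(j0 := - (\<Sum>j\<in>S'. c' j * A k j) / A k j0)"
    have split: "(\<Sum>j\<in>S. c j * A e j) = c j0 * A e j0 + (\<Sum>j\<in>S'. c' j * A e j)" for e
    proof -
      have "S = insert j0 S'" using j0 by (auto simp: S'_def)
      then have "(\<Sum>j\<in>S. c j * A e j) = (\<Sum>j\<in>insert j0 S'. c j * A e j)"
        by (rule arg_cong)
      also have "\<dots> = c j0 * A e j0 + (\<Sum>j\<in>S'. c j * A e j)"
        using fS' by (rule sum.insert) (simp add: S'_def)
      also have "(\<Sum>j\<in>S'. c j * A e j) = (\<Sum>j\<in>S'. c' j * A e j)"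
        by (rule sum.cong) (auto simp: c_def S'_def)
      finally show ?thesis .
    qed
    have "\<forall>e<Suc k. (\<Sum>j\<in>S. c j * A e j) = 0"
    proof (intro allI impI)
      fix e assume "e < Suc k"
      define X where "X = (\<Sum>j\<in>S'. c' j * A k j)"
      have cj0: "c j0 = - X / A k j0" by (simp add: c_def X_def)
      show "(\<Sum>j\<in>S. c j * A e j) = 0"
      proof (cases "e = k")
        case True
        have "(\<Sum>j\<in>S. c j * A e j) = - X / A k j0 * A k j0 + X"
          unfolding split cj0 True X_def ..
        also have "\<dots> = 0" using j0 by simp
        finally show ?thesis .
      next
        case False
        with \<open>e < Suc k\<close> have "e < k" by simp
        have "(\<Sum>j\<in>S'. c' j * A' e j) = (\<Sum>j\<in>S'. c' j * A e j - (A e j0 / A k j0) * (c' j * A k j))"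
          by (rule sum.cong) (simp_all add: A'_def right_diff_distrib)
        also have "\<dots> = (\<Sum>j\<in>S'. c' j * A e j) - (A e j0 / A k j0) * X"
          by (simp add: sum_subtractf sum_distrib_left X_def)
        finally have "(\<Sum>j\<in>S'. c' j * A e j) = (A e j0 / A k j0) * X"
          using c'(2) \<open>e < k\<close> by simp
        then have "(\<Sum>j\<in>S. c j * A e j) = - X / A k j0 * A e j0 + (A e j0 / A k j0) * X"
          unfolding split cj0 by simp
        also have "\<dots> = 0" by simp
        finally show ?thesis .
      qed
    qed
    moreover have "\<exists>j\<in>S. c j \<noteq> 0" using c'(1) by (auto simp: c_def S'_def)
    ultimately show ?thesis by blast
  qed
qed

lemma rk_set_finite: "finite {card S | S. S \<subseteq> {..<n} \<and> coords_indep m x S}"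
  by (rule finite_subset[of _ "{..n}"]) (auto intro: card_mono[of "{..<n}", simplified])

lemma indep_empty: "coords_indep m x {}"
  by (simp add: coords_indep_def)

lemma rk_le:
  assumes "\<And>S. S \<subseteq> {..<n} \<Longrightarrow> coords_indep m x S \<Longrightarrow> card S \<le> r"
  shows "rk m n x \<le> r"
  unfolding rk_def
  using rk_set_finite[of n m x] indep_empty[of m x] assms
  by (subst Max_le_iff) auto

lemma rk_attained:
  "\<exists>S. S \<subseteq> {..<n} \<and> coords_indep m x S \<and> card S = rk m n x \<and>
     (\<forall>S'. S' \<subseteq> {..<n} \<and> coords_indep m x S' \<longrightarrow> card S' \<le> rk m n x)"
proof -
  let ?M = "{card S | S. S \<subseteq> {..<n} \<and> coords_indep m x S}"
  have ne: "?M \<noteq> {}" using indep_empty[of m x] by blast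
  have "rk m n x \<in> ?M" unfolding rk_def using Max_in[OF rk_set_finite ne] .
  then obtain S where "S \<subseteq> {..<n}" "coords_indep m x S" "card S = rk m n x" by auto
  moreover have "\<forall>S'. S' \<subseteq> {..<n} \<and> coords_indep m x S' \<longrightarrow> card S' \<le> rk m n x"
    unfolding rk_def using rk_set_finite[of n m x] by (auto intro: Max_ge)
  ultimately show ?thesis by blast
qed

lemma rk_span_bound:
  fixes x G :: "nat \<Rightarrow> nat \<Rightarrow> 'a::field"
  assumes "\<And>j i. j < n \<Longrightarrow> i < m \<Longrightarrow> x j i = (\<Sum>k<r. F j k * G k i)"
  shows "rk m n x \<le> r"
proof (rule rk_le)
  fix S assume S: "S \<subseteq> {..<n}" "coords_indep m x S"
  have fS: "finite S" using S(1) finite_subset by blast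
  show "card S \<le> r"
  proof (rule ccontr)
    assume "\<not> card S \<le> r"
    then have "r < card S" by simp
    from hom_solve[OF fS this, of "\<lambda>e j. F j e"] obtain c where
      c: "\<exists>j\<in>S. c j \<noteq> 0" "\<forall>e<r. (\<Sum>j\<in>S. c j * F j e) = 0" by blast
    have "\<forall>i<m. (\<Sum>j\<in>S. c j * x j i) = 0"
    proof (intro allI impI)
      fix i assume "i < m"
      have "(\<Sum>j\<in>S. c j * x j i) = (\<Sum>j\<in>S. c j * (\<Sum>k<r. F j k * G k i))"
        using S(1) \<open>i < m\<close> assms by (intro sum.cong) auto
      also have "\<dots> = (\<Sum>k<r. (\<Sum>j\<in>S. c j * F j k) * G k i)"
        by (simp add: sum_distrib_left sum_distrib_right mult.assoc) (rule sum.swap)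
      also have "\<dots> = 0" using c(2) by simp
      finally show "(\<Sum>j\<in>S. c j * x j i) = 0" .
    qed
    then have "\<forall>j\<in>S. c j = 0" using S(2) unfolding coords_indep_def by blast
    with c(1) show False by blast
  qed
qed

lemma rk_zero: "rk m n (\<lambda>j i. (0::'a::field)) = 0"
  using rk_span_bound[where x="\<lambda>j i. (0::'a)" and r=0 and n=n and m=m and F="\<lambda>_ _. 0" and G="\<lambda>_ _. 0"] by simp

lemma max_indep_spans:
  fixes x :: "nat \<Rightarrow> nat \<Rightarrow> 'a::field"
  assumes S: "S \<subseteq> {..<n}" "coords_indep m x S"
    and max: "\<forall>S'. S' \<subseteq> {..<n} \<and> coords_indep m x S' \<longrightarrow> card S' \<le> card S"
    and j: "j < n" "j \<notin> S"
  shows "\<exists>a. \<forall>i<m. x j i = (\<Sum>k\<in>S. a k * x k i)"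
proof -
  have fS: "finite S" using S(1) finite_subset by blast
  have "card (insert j S) > card S" using fS j by simp
  moreover have "insert j S \<subseteq> {..<n}" using S j by auto
  ultimately have "\<not> coords_indep m x (insert j S)" using max by (meson leD)
  then obtain c where c: "\<forall>i<m. (\<Sum>l\<in>insert j S. c l * x l i) = 0" "\<exists>l\<in>insert j S. c l \<noteq> 0"
    unfolding coords_indep_def by blast
  have sum_eq: "\<And>i. (\<Sum>l\<in>insert j S. c l * x l i) = c j * x j i + (\<Sum>l\<in>S. c l * x l i)"
    using fS j by simp
  have cj: "c j \<noteq> 0"
  proof
    assume "c j = 0"
    then have "\<forall>i<m. (\<Sum>l\<in>S. c l * x l i) = 0" using c(1) sum_eq by simp
    then have "\<forall>l\<in>S. c l = 0" using S(2) unfolding coords_indep_def by blast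
    with c(2) \<open>c j = 0\<close> show False by blast
  qed
  show ?thesis
  proof (intro exI[of _ "\<lambda>k. - c k / c j"] allI impI)
    fix i assume "i < m"
    then have "c j * x j i = - (\<Sum>l\<in>S. c l * x l i)" using c(1) sum_eq by (simp add: eq_neg_iff_add_eq_0)
    then have "x j i = - (\<Sum>l\<in>S. c l * x l i) / c j" using cj by (simp add: field_simps)
    also have "\<dots> = (\<Sum>k\<in>S. - (c k * x k i) / c j)"
      by (simp only: sum_negf[symmetric] sum_divide_distrib)
    also have "\<dots> = (\<Sum>k\<in>S. - c k / c j * x k i)"
      by (rule sum.cong) auto
    finally show "x j i = (\<Sum>k\<in>S. - c k / c j * x k i)" .
  qed
qed



definition ball0 :: "nat \<Rightarrow> nat \<Rightarrow> nat \<Rightarrow> (nat \<Rightarrow> nat \<Rightarrow> 'a::field) set" where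
  "ball0 m n r = {x \<in> words m n. rk m n x \<le> r}"

definition Phi :: "nat \<Rightarrow> nat \<Rightarrow> nat set \<Rightarrow> (nat \<Rightarrow> nat \<Rightarrow> 'a::field) \<Rightarrow> nat \<Rightarrow> nat \<Rightarrow> 'a" where
  "Phi m n S h = (\<lambda>j i. if j \<in> S then h j i else if j < n \<and> i < m then (\<Sum>k\<in>S. h j k * h k i) else 0)"

definition AS :: "nat \<Rightarrow> nat \<Rightarrow> nat set \<Rightarrow> (nat \<times> nat) set" where
  "AS m n S = S \<times> {..<m} \<union> ({..<n} - S) \<times> S"

lemma card_AS:
  assumes "S \<subseteq> {..<n}"
  shows "finite (AS m n S) \<and> card (AS m n S) = card S * m + (n - card S) * card S"
proof -
  have fS: "finite S" using assms finite_subset by blast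
  have disj: "S \<times> {..<m} \<inter> ({..<n} - S) \<times> S = {}" by auto
  have "card (AS m n S) = card (S \<times> {..<m}) + card (({..<n} - S) \<times> S)"
    unfolding AS_def using fS by (intro card_Un_disjoint) auto
  also have "\<dots> = card S * m + (n - card S) * card S"
    using fS assms by (simp add: card_cartesian_product card_Diff_subset)
  finally show ?thesis using fS by (simp add: AS_def)
qed

lemma exp_mono:
  fixes s r n m :: nat
  assumes "s \<le> r" "r \<le> n" "r \<le> m"
  shows "s * m + (n - s) * s \<le> r * m + (n - r) * r"
proof -
  obtain d where d: "r = s + d" using assms(1) le_Suc_ex by blast
  obtain e where e: "n = r + e" using assms(2) le_Suc_ex by blast
  have "d * s \<le> d * m" using assms by simp
  then have h: "d * s \<le> d * e + d * m" by linarith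
  show ?thesis using h unfolding d e by (simp add: algebra_simps)
qed

lemma ball0_subset:
  "ball0 m n r \<subseteq> (\<Union>S\<in>{S. S \<subseteq> {..<n} \<and> card S \<le> r}. Phi m n S ` fsupp (AS m n S))"
proof
  fix x :: "nat \<Rightarrow> nat \<Rightarrow> 'a" assume "x \<in> ball0 m n r"
  then have xw: "x \<in> words m n" and xr: "rk m n x \<le> r" by (auto simp: ball0_def)
  obtain S where S: "S \<subseteq> {..<n}" "coords_indep m x S" "card S = rk m n x"
    and max: "\<forall>S'. S' \<subseteq> {..<n} \<and> coords_indep m x S' \<longrightarrow> card S' \<le> rk m n x"
    using rk_attained by blast
  have ex: "\<forall>j. \<exists>a. j < n \<and> j \<notin> S \<longrightarrow> (\<forall>i<m. x j i = (\<Sum>k\<in>S. a k * x k i))"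
  proof
    fix j
    show "\<exists>a. j < n \<and> j \<notin> S \<longrightarrow> (\<forall>i<m. x j i = (\<Sum>k\<in>S. a k * x k i))"
    proof (cases "j < n \<and> j \<notin> S")
      case True
      have max': "\<forall>S'. S' \<subseteq> {..<n} \<and> coords_indep m x S' \<longrightarrow> card S' \<le> card S"
        using max S(3) by simp
      from max_indep_spans[OF S(1,2) max'] True obtain a where "\<forall>i<m. x j i = (\<Sum>k\<in>S. a k * x k i)"
        by blast
      then show ?thesis by blast
    next
      case False then show ?thesis by blast
    qed
  qed
  obtain a where a0: "\<forall>j. j < n \<and> j \<notin> S \<longrightarrow> (\<forall>i<m. x j i = (\<Sum>k\<in>S. a j k * x k i))"
    using choice[OF ex] by blast
  have a: "\<And>j i. j < n \<Longrightarrow> j \<notin> S \<Longrightarrow> i < m \<Longrightarrow> x j i = (\<Sum>k\<in>S. a j k * x k i)"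
    using a0 by blast
  define h where "h = (\<lambda>j i. if j \<in> S then x j i else if j < n \<and> i \<in> S then a j i else 0)"
  have hP: "h \<in> fsupp (AS m n S)"
    unfolding fsupp_def AS_def h_def using xw by (auto simp: words_def not_le)
  have Ph: "Phi m n S h = x"
  proof (intro ext)
    fix j i
    show "Phi m n S h j i = x j i"
    proof (cases "j \<in> S")
      case True then show ?thesis by (simp add: Phi_def h_def)
    next
      case False
      show ?thesis
      proof (cases "j < n \<and> i < m")
        case True
        have "Phi m n S h j i = (\<Sum>k\<in>S. h j k * h k i)" using True False by (simp add: Phi_def)
        also have "\<dots> = (\<Sum>k\<in>S. a j k * x k i)"
          by (rule sum.cong) (use True False in \<open>auto simp: h_def\<close>)
        also have "\<dots> = x j i" using True False by (intro a[symmetric]) auto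
        finally show ?thesis .
      next
        case False2: False
        then have "x j i = 0" using xw by (auto simp: words_def not_less)
        then show ?thesis by (simp only: Phi_def if_not_P[OF False] if_not_P[OF False2])
      qed
    qed
  qed
  have "x \<in> Phi m n S ` fsupp (AS m n S)" by (rule image_eqI[where f="Phi m n S", OF Ph[symmetric] hP])
  moreover have "S \<in> {S. S \<subseteq> {..<n} \<and> card S \<le> r}" using S xr by simp
  ultimately show "x \<in> (\<Union>S\<in>{S. S \<subseteq> {..<n} \<and> card S \<le> r}. Phi m n S ` fsupp (AS m n S))"
    by (rule UN_I[rotated])
qed

lemma card_ball0_upper:
  assumes "r \<le> n" "r \<le> m"
  shows "finite (ball0 m n r :: (nat \<Rightarrow> nat \<Rightarrow> 'a::{field,finite}) set) \<and>
    card (ball0 m n r :: (nat \<Rightarrow> nat \<Rightarrow> 'a) set) \<le> 2 ^ n * CARD('a) ^ (r * m + (n - r) * r)"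
proof -
  let ?I = "{S. S \<subseteq> {..<n} \<and> card S \<le> r}"
  let ?q = "CARD('a)"
  let ?E = "r * m + (n - r) * r"
  have fI: "finite ?I" by (rule finite_subset[of _ "Pow {..<n}"]) auto
  have cI: "card ?I \<le> 2 ^ n"
    using card_mono[of "Pow {..<n}" ?I] by (auto simp: card_Pow)
  have fin: "finite (Phi m n S ` fsupp (AS m n S) :: (nat \<Rightarrow> nat \<Rightarrow> 'a) set)" if "S \<in> ?I" for S
    using card_fsupp[of "AS m n S", where 'a='a] card_AS[of S n m] that by auto
  have cS: "card (Phi m n S ` fsupp (AS m n S) :: (nat \<Rightarrow> nat \<Rightarrow> 'a) set) \<le> ?q ^ ?E" if "S \<in> ?I" for S
  proof -
    have "card (Phi m n S ` fsupp (AS m n S) :: (nat \<Rightarrow> nat \<Rightarrow> 'a) set)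
          \<le> card (fsupp (AS m n S) :: (nat \<Rightarrow> nat \<Rightarrow> 'a) set)"
      by (rule card_image_le) (use card_fsupp[of "AS m n S", where 'a='a] card_AS[of S n m] that in auto)
    also have "\<dots> = ?q ^ (card S * m + (n - card S) * card S)"
      using card_fsupp[of "AS m n S", where 'a='a] card_AS[of S n m] that by auto
    also have "\<dots> \<le> ?q ^ ?E"
      by (rule power_increasing) (use exp_mono[of "card S" r n m] that assms in auto)
    finally show ?thesis .
  qed
  have finU: "finite (\<Union>S\<in>?I. Phi m n S ` fsupp (AS m n S) :: (nat \<Rightarrow> nat \<Rightarrow> 'a) set)"
    using fI fin by blast
  have "card (ball0 m n r :: (nat \<Rightarrow> nat \<Rightarrow> 'a) set)
        \<le> card (\<Union>S\<in>?I. Phi m n S ` fsupp (AS m n S) :: (nat \<Rightarrow> nat \<Rightarrow> 'a) set)"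
    by (rule card_mono[OF finU ball0_subset])
  also have "\<dots> \<le> (\<Sum>S\<in>?I. card (Phi m n S ` fsupp (AS m n S) :: (nat \<Rightarrow> nat \<Rightarrow> 'a) set))"
    by (rule card_UN_le[OF fI])
  also have "\<dots> \<le> (\<Sum>S\<in>?I. ?q ^ ?E)" by (rule sum_mono) (rule cS)
  also have "\<dots> = card ?I * ?q ^ ?E" by simp
  also have "\<dots> \<le> 2 ^ n * ?q ^ ?E" using cI by simp
  finally show ?thesis using finite_subset[OF ball0_subset finU] by simp
qed



definition spanv :: "nat \<Rightarrow> (nat \<Rightarrow> nat \<Rightarrow> 'a::field) \<Rightarrow> (nat \<Rightarrow> 'a) set" where
  "spanv k g = (\<lambda>a. \<lambda>i. \<Sum>j<k. a j * g j i) ` vecs k"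

definition IND :: "nat \<Rightarrow> nat \<Rightarrow> (nat \<Rightarrow> nat \<Rightarrow> 'a::field) set" where
  "IND m k = {g \<in> words m k. coords_indep m g {..<k}}"

lemma card_ge2: "2 \<le> CARD('a::{field,finite})"
proof -
  have "card {0::'a, 1} \<le> CARD('a)" by (rule card_mono) auto
  then show ?thesis by simp
qed

lemma card_spanv: "card (spanv k (g :: nat \<Rightarrow> nat \<Rightarrow> 'a::{field,finite})) \<le> CARD('a) ^ k"
proof -
  have "card (spanv k g) \<le> card (vecs k :: (nat \<Rightarrow> 'a) set)"
    unfolding spanv_def by (rule card_image_le) (use card_vecs[where 'a='a] in auto)
  then show ?thesis using card_vecs[where 'a='a, of k] by simp
qed

lemma extend_indep:
  fixes g :: "nat \<Rightarrow> nat \<Rightarrow> 'a::field"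
  assumes g: "g \<in> IND m k" and v: "v \<in> vecs m" "v \<notin> spanv k g"
  shows "g(k := v) \<in> IND m (Suc k)"
proof -
  have gw: "g \<in> words m k" and gi: "coords_indep m g {..<k}" using g by (auto simp: IND_def)
  have w: "g(k := v) \<in> words m (Suc k)"
    using gw v(1) by (auto simp: words_def vecs_def)
  have "coords_indep m (g(k := v)) {..<Suc k}"
    unfolding coords_indep_def
  proof (intro allI impI)
    fix c :: "nat \<Rightarrow> 'a"
    assume c: "\<forall>i<m. (\<Sum>j<Suc k. c j * (g(k := v)) j i) = 0"
    have eq: "(\<Sum>j<Suc k. c j * (g(k := v)) j i) = (\<Sum>j<k. c j * g j i) + c k * v i" for i
    proof -
      have "(\<Sum>j<Suc k. c j * (g(k := v)) j i) = (\<Sum>j<k. c j * (g(k := v)) j i) + c k * v i"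
        by simp
      also have "(\<Sum>j<k. c j * (g(k := v)) j i) = (\<Sum>j<k. c j * g j i)"
        by (rule sum.cong) auto
      finally show ?thesis .
    qed
    have ck: "c k = 0"
    proof (rule ccontr)
      assume ck: "c k \<noteq> 0"
      define a where "a = (\<lambda>j. if j < k then - c j / c k else 0)"
      have a: "a \<in> vecs k" by (simp add: a_def vecs_def)
      have "v = (\<lambda>i. \<Sum>j<k. a j * g j i)"
      proof
        fix i
        show "v i = (\<Sum>j<k. a j * g j i)"
        proof (cases "i < m")
          case True
          then have "(\<Sum>j<k. c j * g j i) + c k * v i = 0" using c eq by simp
          then have "v i = - (\<Sum>j<k. c j * g j i) / c k" using ck by (simp add: field_simps add_eq_0_iff)
          also have "\<dots> = (\<Sum>j<k. - (c j * g j i) / c k)"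
            by (simp only: sum_negf[symmetric] sum_divide_distrib)
          also have "\<dots> = (\<Sum>j<k. a j * g j i)"
            by (rule sum.cong) (auto simp: a_def)
          finally show ?thesis .
        next
          case False
          then have "v i = 0" using v(1) by (simp add: vecs_def)
          moreover have "(\<Sum>j<k. a j * g j i) = 0"
            using gw False by (intro sum.neutral) (simp add: words_def)
          ultimately show ?thesis by simp
        qed
      qed
      then have "v \<in> spanv k g" unfolding spanv_def using a by (rule image_eqI)
      with v(2) show False by contradiction
    qed
    have "\<forall>i<m. (\<Sum>j<k. c j * g j i) = 0" using c eq ck by simp
    then have "\<forall>j\<in>{..<k}. c j = 0" using gi unfolding coords_indep_def by blast
    then show "\<forall>j\<in>{..<Suc k}. c j = 0" using ck by (auto simp: less_Suc_eq)
  qed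
  then show ?thesis using w by (simp add: IND_def)
qed

lemma finite_IND: "finite (IND m k :: (nat \<Rightarrow> nat \<Rightarrow> 'a::{field,finite}) set)"
  by (rule finite_subset[of _ "words m k"]) (auto simp: IND_def card_words)

lemma card_IND:
  "k \<le> m \<Longrightarrow> CARD('a) ^ ((m - 1) * k) \<le> card (IND m k :: (nat \<Rightarrow> nat \<Rightarrow> 'a::{field,finite}) set)"
proof (induction k)
  case 0
  have "(\<lambda>_ _. 0) \<in> (IND m 0 :: (nat \<Rightarrow> nat \<Rightarrow> 'a) set)"
    by (simp add: IND_def words_def coords_indep_def)
  then have "IND m 0 \<noteq> ({} :: (nat \<Rightarrow> nat \<Rightarrow> 'a) set)" by blast
  then have "0 < card (IND m 0 :: (nat \<Rightarrow> nat \<Rightarrow> 'a) set)" using finite_IND by (simp add: card_gt_0_iff)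
  then show ?case by simp
next
  case (Suc k)
  let ?q = "CARD('a)"
  let ?I = "IND m k :: (nat \<Rightarrow> nat \<Rightarrow> 'a) set"
  let ?F = "Sigma ?I (\<lambda>g. vecs m - spanv k g)"
  let ?phi = "\<lambda>(g, v). g(k := v)"
  have IH: "?q ^ ((m - 1) * k) \<le> card ?I" using Suc by simp
  have km: "k \<le> m - 1" using Suc.prems by simp
  have q2: "2 \<le> ?q" by (rule card_ge2)
  have diff: "?q ^ (m - 1) \<le> card (vecs m - spanv k g)" for g :: "nat \<Rightarrow> nat \<Rightarrow> 'a"
  proof -
    have "?q ^ k \<le> ?q ^ (m - 1)" using km q2 by (intro power_increasing) auto
    moreover have "?q ^ m = ?q * ?q ^ (m - 1)" using Suc.prems
      by (metis Suc_diff_1 Suc_le_lessD gr_zeroI less_nat_zero_code power_Suc)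
    moreover have "?q * ?q ^ (m - 1) \<ge> 2 * ?q ^ (m - 1)" using q2 by simp
    ultimately have "?q ^ (m - 1) \<le> ?q ^ m - ?q ^ k" by linarith
    also have "?q ^ m - ?q ^ k \<le> card (vecs m :: (nat \<Rightarrow> 'a) set) - card (spanv k g)"
      using card_vecs[where 'a='a, of m] card_spanv[of k g] by simp
    also have "\<dots> \<le> card (vecs m - spanv k g)"
      by (rule diff_card_le_card_Diff) (simp add: spanv_def card_vecs)
    finally show ?thesis .
  qed
  have finF: "finite ?F"
    using finite_IND card_vecs[where 'a='a] by (intro finite_SigmaI) auto
  have inj: "inj_on ?phi ?F"
  proof (rule inj_onI)
    fix p p' assume p: "p \<in> ?F" and p': "p' \<in> ?F" and eq: "?phi p = ?phi p'"
    obtain g v where gv: "p = (g, v)" by (cases p)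
    obtain g' v' where gv': "p' = (g', v')" by (cases p')
    have gk: "g k = (\<lambda>_. 0)" "g' k = (\<lambda>_. 0)"
      using p p' gv gv' by (auto simp: IND_def words_def)
    have eq2: "g(k := v) = g'(k := v')" using eq gv gv' by simp
    then have "v = v'" by (metis fun_upd_same)
    moreover have "g = g'"
    proof
      fix j show "g j = g' j"
        using fun_cong[OF eq2, of j] gk by (cases "j = k") auto
    qed
    ultimately show "p = p'" using gv gv' by simp
  qed
  have sub: "?phi ` ?F \<subseteq> IND m (Suc k)"
    using extend_indep by auto
  have "card ?F = (\<Sum>g\<in>?I. card (vecs m - spanv k g))"
    using finite_IND card_vecs[where 'a='a] by (intro card_SigmaI) auto
  also have "\<dots> \<ge> (\<Sum>g\<in>?I. ?q ^ (m - 1))" by (intro sum_mono diff)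
  finally have "card ?I * ?q ^ (m - 1) \<le> card ?F" by simp
  moreover have "card ?F = card (?phi ` ?F)" using card_image[OF inj] by simp
  moreover have "card (?phi ` ?F) \<le> card (IND m (Suc k) :: (nat \<Rightarrow> nat \<Rightarrow> 'a) set)"
    by (rule card_mono[OF finite_IND sub])
  ultimately have "card ?I * ?q ^ (m - 1) \<le> card (IND m (Suc k) :: (nat \<Rightarrow> nat \<Rightarrow> 'a) set)"
    by linarith
  moreover have "?q ^ ((m - 1) * Suc k) = ?q ^ ((m - 1) * k) * ?q ^ (m - 1)"
  proof -
    have e: "(m - 1) * Suc k = (m - 1) * k + (m - 1)" by simp
    show ?thesis unfolding e by (rule power_add)
  qed
  moreover have "?q ^ ((m - 1) * k) * ?q ^ (m - 1) \<le> card ?I * ?q ^ (m - 1)"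
    using IH by simp
  ultimately show ?case by linarith
qed



definition Psi :: "nat \<Rightarrow> nat \<Rightarrow> nat \<Rightarrow> (nat \<Rightarrow> nat \<Rightarrow> 'a::field) \<times> (nat \<Rightarrow> nat \<Rightarrow> 'a) \<Rightarrow> nat \<Rightarrow> nat \<Rightarrow> 'a" where
  "Psi m n r p = (\<lambda>j i. if j < r then fst p j i else if j < n \<and> i < m then (\<Sum>k<r. snd p j k * fst p k i) else 0)"

lemma Psi_in_ball:
  fixes g f :: "nat \<Rightarrow> nat \<Rightarrow> 'a::field"
  assumes "r \<le> n" "g \<in> IND m r"
  shows "Psi m n r (g, f) \<in> ball0 m n r"
proof -
  have gw: "g \<in> words m r" using assms by (simp add: IND_def)
  have w: "Psi m n r (g, f) \<in> words m n"
    unfolding words_def mem_Collect_eq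
  proof (intro allI impI)
    fix j i assume h: "n \<le> j \<or> m \<le> i"
    show "Psi m n r (g, f) j i = 0"
    proof (cases "j < r")
      case True
      then have "m \<le> i" using h assms(1) by linarith
      then show ?thesis using True gw by (simp add: Psi_def words_def)
    next
      case False
      then show ?thesis using h by (auto simp: Psi_def)
    qed
  qed
  define F where "F = (\<lambda>j k. if j < r then (if k = j then 1 else 0) else f j k)"
  have "rk m n (Psi m n r (g, f)) \<le> r"
  proof (rule rk_span_bound[where F = F and G = g])
    fix j i assume j: "j < n" and i: "i < m"
    show "Psi m n r (g, f) j i = (\<Sum>k<r. F j k * g k i)"
    proof (cases "j < r")
      case True
      have "(\<Sum>k<r. F j k * g k i) = (\<Sum>k<r. (if k = j then g k i else 0))"
        by (rule sum.cong) (auto simp: F_def True)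
      also have "\<dots> = g j i" using True by (simp add: sum.delta)
      finally show ?thesis using True by (simp add: Psi_def)
    next
      case False
      then show ?thesis using j i by (simp add: Psi_def F_def)
    qed
  qed
  then show ?thesis using w by (simp add: ball0_def)
qed

lemma Psi_inj:
  assumes "r \<le> n"
  shows "inj_on (Psi m n r) (IND m r \<times> fsupp ({r..<n} \<times> {..<r}) :: ((nat \<Rightarrow> nat \<Rightarrow> 'a::field) \<times> _) set)"
proof (rule inj_onI)
  fix p p' :: "(nat \<Rightarrow> nat \<Rightarrow> 'a) \<times> (nat \<Rightarrow> nat \<Rightarrow> 'a)"
  assume p: "p \<in> IND m r \<times> fsupp ({r..<n} \<times> {..<r})" and p': "p' \<in> IND m r \<times> fsupp ({r..<n} \<times> {..<r})"
    and eq: "Psi m n r p = Psi m n r p'"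
  obtain g f where gf: "p = (g, f)" by (cases p)
  obtain g' f' where gf': "p' = (g', f')" by (cases p')
  have g: "g \<in> IND m r" "f \<in> fsupp ({r..<n} \<times> {..<r})" using p gf by auto
  have g': "g' \<in> IND m r" "f' \<in> fsupp ({r..<n} \<times> {..<r})" using p' gf' by auto
  have e: "Psi m n r (g, f) j i = Psi m n r (g', f') j i" for j i using eq gf gf' by simp
  have gg: "g = g'"
  proof (intro ext)
    fix j i
    show "g j i = g' j i"
    proof (cases "j < r")
      case True then show ?thesis using e[of j i] by (simp add: Psi_def)
    next
      case False then show ?thesis using g(1) g'(1) by (simp add: IND_def words_def)
    qed
  qed
  have ff: "f = f'"
  proof (intro ext)
    fix j k
    show "f j k = f' j k"
    proof (cases "(j, k) \<in> {r..<n} \<times> {..<r}")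
      case False then show ?thesis using g(2) g'(2) by (simp add: fsupp_def)
    next
      case True
      then have j: "r \<le> j" "j < n" and k: "k < r" by auto
      define c where "c = (\<lambda>l. f j l - f' j l)"
      have "\<forall>i<m. (\<Sum>l<r. c l * g l i) = 0"
      proof (intro allI impI)
        fix i assume "i < m"
        then have "(\<Sum>l<r. f j l * g l i) = (\<Sum>l<r. f' j l * g l i)"
          using e[of j i] j gg by (simp add: Psi_def)
        then show "(\<Sum>l<r. c l * g l i) = 0"
          by (simp add: c_def left_diff_distrib sum_subtractf)
      qed
      then have "\<forall>l\<in>{..<r}. c l = 0" using g(1) by (simp add: IND_def coords_indep_def)
      then show ?thesis using k by (simp add: c_def)
    qed
  qed
  show "p = p'" using gf gf' gg ff by simp
qed

lemma card_ball0_lower: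
  assumes "r \<le> n" "r \<le> m"
  shows "CARD('a::{field,finite}) ^ ((m - 1) * r + (n - r) * r) \<le> card (ball0 m n r :: (nat \<Rightarrow> nat \<Rightarrow> 'a) set)"
proof -
  let ?q = "CARD('a)"
  let ?D = "IND m r \<times> fsupp ({r..<n} \<times> {..<r}) :: ((nat \<Rightarrow> nat \<Rightarrow> 'a) \<times> (nat \<Rightarrow> nat \<Rightarrow> 'a)) set"
  have cF: "card (fsupp ({r..<n} \<times> {..<r}) :: (nat \<Rightarrow> nat \<Rightarrow> 'a) set) = ?q ^ ((n - r) * r)"
    using card_fsupp[of "{r..<n} \<times> {..<r}", where 'a='a] by (simp add: card_cartesian_product)
  have "?q ^ ((m - 1) * r + (n - r) * r) = ?q ^ ((m - 1) * r) * ?q ^ ((n - r) * r)"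
    by (rule power_add)
  also have "\<dots> \<le> card (IND m r :: (nat \<Rightarrow> nat \<Rightarrow> 'a) set) * ?q ^ ((n - r) * r)"
    using card_IND[OF assms(2), where 'a='a] by simp
  also have "\<dots> = card ?D" using cF by (simp add: card_cartesian_product)
  also have "\<dots> = card (Psi m n r ` ?D)" by (rule card_image[symmetric, OF Psi_inj[OF assms(1)]])
  also have "\<dots> \<le> card (ball0 m n r :: (nat \<Rightarrow> nat \<Rightarrow> 'a) set)"
    by (rule card_mono) (use card_ball0_upper[OF assms, where 'a='a] Psi_in_ball[OF assms(1)] in auto)
  finally show ?thesis .
qed



lemma rank_dist_self: "rank_dist m n x x = 0"
  unfolding rank_dist_def using rk_zero by simp

lemma card_ball_center:
  fixes c :: "nat \<Rightarrow> nat \<Rightarrow> 'a::field"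
  assumes "c \<in> words m n"
  shows "card {x \<in> words m n. rank_dist m n x c \<le> r} = card (ball0 m n r :: (nat \<Rightarrow> nat \<Rightarrow> 'a) set)"
proof (rule bij_betw_same_card[of "\<lambda>x j i. x j i - c j i"])
  show "bij_betw (\<lambda>x j i. x j i - c j i) {x \<in> words m n. rank_dist m n x c \<le> r} (ball0 m n r)"
  proof (rule bij_betw_byWitness[where f' = "\<lambda>y j i. y j i + c j i"])
    show "\<forall>a\<in>{x \<in> words m n. rank_dist m n x c \<le> r}. (\<lambda>j i. (a j i - c j i) + c j i) = a" by simp
    show "\<forall>a'\<in>ball0 m n r. (\<lambda>j i. (a' j i + c j i) - c j i) = a'" by simp
    show "(\<lambda>x j i. x j i - c j i) ` {x \<in> words m n. rank_dist m n x c \<le> r} \<subseteq> ball0 m n r"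
      using assms by (auto simp: ball0_def words_def rank_dist_def)
    show "(\<lambda>y j i. y j i + c j i) ` ball0 m n r \<subseteq> {x \<in> words m n. rank_dist m n x c \<le> r}"
      using assms by (auto simp: ball0_def words_def rank_dist_def)
  qed
qed

lemma card_ball_word:
  fixes x :: "nat \<Rightarrow> nat \<Rightarrow> 'a::field"
  assumes "x \<in> words m n"
  shows "card {c \<in> words m n. rank_dist m n x c \<le> r} = card (ball0 m n r :: (nat \<Rightarrow> nat \<Rightarrow> 'a) set)"
proof (rule bij_betw_same_card[of "\<lambda>c j i. x j i - c j i"])
  show "bij_betw (\<lambda>c j i. x j i - c j i) {c \<in> words m n. rank_dist m n x c \<le> r} (ball0 m n r)"
  proof (rule bij_betw_byWitness[where f' = "\<lambda>y j i. x j i - y j i"])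
    show "\<forall>a\<in>{c \<in> words m n. rank_dist m n x c \<le> r}. (\<lambda>j i. x j i - (x j i - a j i)) = a" by simp
    show "\<forall>a'\<in>ball0 m n r. (\<lambda>j i. x j i - (x j i - a' j i)) = a'" by simp
    show "(\<lambda>c j i. x j i - c j i) ` {c \<in> words m n. rank_dist m n x c \<le> r} \<subseteq> ball0 m n r"
      using assms by (auto simp: ball0_def words_def rank_dist_def)
    show "(\<lambda>y j i. x j i - y j i) ` ball0 m n r \<subseteq> {c \<in> words m n. rank_dist m n x c \<le> r}"
      using assms by (auto simp: ball0_def words_def rank_dist_def)
  qed
qed

lemma K_R_exists:
  "\<exists>C :: (nat \<Rightarrow> nat \<Rightarrow> 'a::{field,finite}) set. C \<subseteq> words m n \<and> card C = card (words m n :: (nat \<Rightarrow> nat \<Rightarrow> 'a) set) \<and> rank_covers m n C r"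
proof (intro exI[of _ "words m n"] conjI)
  show "rank_covers m n (words m n :: (nat \<Rightarrow> nat \<Rightarrow> 'a) set) r"
    unfolding rank_covers_def
  proof
    fix x :: "nat \<Rightarrow> nat \<Rightarrow> 'a" assume "x \<in> words m n"
    then show "\<exists>c\<in>words m n. rank_dist m n x c \<le> r"
      using rank_dist_self[of m n x] by (intro bexI[of _ x]) auto
  qed
qed auto

lemma K_R_lower:
  "card (words m n :: (nat \<Rightarrow> nat \<Rightarrow> 'a::{field,finite}) set)
     \<le> K_R TYPE('a) m n r * card (ball0 m n r :: (nat \<Rightarrow> nat \<Rightarrow> 'a) set)"
proof -
  let ?P = "\<lambda>k. \<exists>C :: (nat \<Rightarrow> nat \<Rightarrow> 'a) set. C \<subseteq> words m n \<and> card C = k \<and> rank_covers m n C r"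
  have ex: "\<exists>k. ?P k" using K_R_exists[of m n r, where 'a='a] by (rule exI)
  have PL: "?P (Least ?P)" by (rule LeastI_ex[OF ex])
  have KL: "K_R TYPE('a) m n r = Least ?P" by (simp add: K_R_def)
  obtain C :: "(nat \<Rightarrow> nat \<Rightarrow> 'a) set" where C: "C \<subseteq> words m n" "card C = Least ?P"
    "rank_covers m n C r"
    using PL by blast
  have fW: "finite (words m n :: (nat \<Rightarrow> nat \<Rightarrow> 'a) set)" using card_words by blast
  have fC: "finite C" using finite_subset[OF C(1) fW] .
  have "words m n \<subseteq> (\<Union>c\<in>C. {x \<in> words m n. rank_dist m n x c \<le> r})"
  proof
    fix x assume x: "x \<in> (words m n :: (nat \<Rightarrow> nat \<Rightarrow> 'a) set)"
    then obtain c where c: "c \<in> C" "rank_dist m n x c \<le> r" using C(3) unfolding rank_covers_def by blast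
    then show "x \<in> (\<Union>c\<in>C. {x \<in> words m n. rank_dist m n x c \<le> r})" using x by blast
  qed
  then have "card (words m n :: (nat \<Rightarrow> nat \<Rightarrow> 'a) set)
      \<le> card (\<Union>c\<in>C. {x \<in> words m n. rank_dist m n x c \<le> r})"
    by (rule card_mono[rotated]) (use fC fW in auto)
  also have "\<dots> \<le> (\<Sum>c\<in>C. card {x \<in> words m n. rank_dist m n x c \<le> r})"
    by (rule card_UN_le[OF fC])
  also have "\<dots> = (\<Sum>c\<in>C. card (ball0 m n r :: (nat \<Rightarrow> nat \<Rightarrow> 'a) set))"
  proof (rule sum.cong[OF refl])
    fix c assume "c \<in> C"
    have "c \<in> words m n" using C(1) \<open>c \<in> C\<close> by (rule subsetD)
    then show "card {x \<in> words m n. rank_dist m n x c \<le> r} = card (ball0 m n r :: (nat \<Rightarrow> nat \<Rightarrow> 'a) set)"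
      by (rule card_ball_center)
  qed
  also have "\<dots> = K_R TYPE('a) m n r * card (ball0 m n r :: (nat \<Rightarrow> nat \<Rightarrow> 'a) set)"
    using C(2) KL by simp
  finally show ?thesis .
qed

lemma K_R_upper_from_code:
  fixes C :: "(nat \<Rightarrow> nat \<Rightarrow> 'a::{field,finite}) set"
  assumes "C \<subseteq> words m n" "rank_covers m n C r" "card C \<le> N"
  shows "K_R TYPE('a) m n r \<le> N"
proof -
  have "K_R TYPE('a) m n r \<le> card C"
    unfolding K_R_def
  proof (rule Least_le)
    show "\<exists>C' :: (nat \<Rightarrow> nat \<Rightarrow> 'a) set. C' \<subseteq> words m n \<and> card C' = card C \<and> rank_covers m n C' r"
      using assms(1,2) by (intro exI[of _ C]) simp
  qed
  then show ?thesis using assms(3) by simp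
qed

lemma covering_exists:
  fixes N m n r :: nat
  defines "Q \<equiv> card (words m n :: (nat \<Rightarrow> nat \<Rightarrow> 'a::{field,finite}) set)"
  defines "V \<equiv> card (ball0 m n r :: (nat \<Rightarrow> nat \<Rightarrow> 'a) set)"
  assumes lt: "Q * (Q - V) ^ N < Q ^ N"
  shows "\<exists>C :: (nat \<Rightarrow> nat \<Rightarrow> 'a) set. C \<subseteq> words m n \<and> rank_covers m n C r \<and> card C \<le> N"
proof (rule ccontr)
  assume no: "\<not> ?thesis"
  let ?W = "words m n :: (nat \<Rightarrow> nat \<Rightarrow> 'a) set"
  let ?T = "PiE {..<N} (\<lambda>_. ?W)"
  let ?D = "\<lambda>x. {c \<in> ?W. rank_dist m n x c \<le> r}"
  let ?B = "\<lambda>x. PiE {..<N} (\<lambda>_. ?W - ?D x)"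
  have fW: "finite ?W" using card_words by blast
  have sub: "?T \<subseteq> (\<Union>x\<in>?W. ?B x)"
  proof
    fix t assume t: "t \<in> ?T"
    have tW: "t ` {..<N} \<subseteq> ?W" using t by auto
    have "card (t ` {..<N}) \<le> N" using card_image_le[of "{..<N}" t] by simp
    then have "\<not> rank_covers m n (t ` {..<N}) r"
    proof (intro notI)
      assume "card (t ` {..<N}) \<le> N" "rank_covers m n (t ` {..<N}) r"
      with tW have "\<exists>C :: (nat \<Rightarrow> nat \<Rightarrow> 'a) set. C \<subseteq> words m n \<and> rank_covers m n C r \<and> card C \<le> N"
        by (intro exI[of _ "t ` {..<N}"]) simp
      with no show False by simp
    qed
    then obtain x where x: "x \<in> ?W" "\<forall>c\<in>t ` {..<N}. \<not> rank_dist m n x c \<le> r"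
      unfolding rank_covers_def by blast
    have "t \<in> ?B x" unfolding PiE_iff using t x by (simp add: PiE_iff)
    then show "t \<in> (\<Union>x\<in>?W. ?B x)" using x(1) by (rule UN_I[rotated])
  qed
  have cB: "card (?B x) = (Q - V) ^ N" if "x \<in> ?W" for x
  proof -
    have "card (?W - ?D x) = Q - V"
      using card_ball_word[OF that, of r] fW unfolding Q_def V_def
      by (subst card_Diff_subset) auto
    then show ?thesis by (simp add: card_PiE)
  qed
  have "Q ^ N = card ?T" by (simp add: card_PiE Q_def)
  also have "\<dots> \<le> card (\<Union>x\<in>?W. ?B x)"
    by (rule card_mono[OF _ sub]) (use fW in \<open>auto intro!: finite_PiE\<close>)
  also have "\<dots> \<le> (\<Sum>x\<in>?W. card (?B x))" by (rule card_UN_le[OF fW])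
  also have "\<dots> = (\<Sum>x\<in>?W. (Q - V) ^ N)" by (rule sum.cong) (use cB in auto)
  also have "\<dots> = Q * (Q - V) ^ N" by (simp add: Q_def)
  finally show False using lt by simp
qed



lemma ball0_le_words:
  "card (ball0 m n r :: (nat \<Rightarrow> nat \<Rightarrow> 'a::{field,finite}) set) \<le> card (words m n :: (nat \<Rightarrow> nat \<Rightarrow> 'a) set)"
  by (rule card_mono) (auto simp: ball0_def card_words)

lemma K_lower_exp:
  assumes "r \<le> n" "r \<le> m"
  shows "CARD('a::{field,finite}) ^ ((n - r) * (m - r)) \<le> K_R TYPE('a) m n r * CARD('a) ^ n"
proof -
  let ?q = "CARD('a)"
  let ?E = "r * m + (n - r) * r"
  let ?K = "K_R TYPE('a) m n r"
  have mn: "m * n = (n - r) * (m - r) + ?E"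
  proof -
    obtain d where d: "n = r + d" using assms(1) le_Suc_ex by blast
    obtain e where e: "m = r + e" using assms(2) le_Suc_ex by blast
    show ?thesis unfolding d e by (simp add: algebra_simps)
  qed
  have q0: "0 < ?q" by simp
  have "?q ^ ((n - r) * (m - r)) * ?q ^ ?E = ?q ^ (m * n)" by (simp add: mn power_add)
  also have "\<dots> = card (words m n :: (nat \<Rightarrow> nat \<Rightarrow> 'a) set)" using card_words by metis
  also have "\<dots> \<le> ?K * card (ball0 m n r :: (nat \<Rightarrow> nat \<Rightarrow> 'a) set)" by (rule K_R_lower)
  also have "\<dots> \<le> ?K * (2 ^ n * ?q ^ ?E)"
    using card_ball0_upper[OF assms, where 'a='a] by simp
  also have "\<dots> \<le> ?K * (?q ^ n * ?q ^ ?E)"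
    using card_ge2[where 'a='a] by (simp add: power_mono)
  finally have "?q ^ ((n - r) * (m - r)) * ?q ^ ?E \<le> (?K * ?q ^ n) * ?q ^ ?E"
    by (simp add: mult.assoc)
  then show ?thesis using q0 by simp
qed

lemma K_upper_exp:
  assumes "r \<le> n" "r \<le> m" "1 \<le> m" "1 \<le> n"
  shows "K_R TYPE('a::{field,finite}) m n r \<le> CARD('a) ^ ((n - r) * (m - r) + r) * (m * n * CARD('a))"
proof -
  let ?q = "CARD('a)"
  let ?E' = "(m - 1) * r + (n - r) * r"
  let ?N = "?q ^ ((n - r) * (m - r) + r) * (m * n * ?q)"
  define Q where "Q = card (words m n :: (nat \<Rightarrow> nat \<Rightarrow> 'a) set)"
  define V where "V = card (ball0 m n r :: (nat \<Rightarrow> nat \<Rightarrow> 'a) set)"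
  have mn: "m * n = ((n - r) * (m - r) + r) + ?E'"
  proof -
    obtain d where d: "n = r + d" using assms(1) le_Suc_ex by blast
    obtain e where e: "m = r + e" using assms(2) le_Suc_ex by blast
    have h1: "m * n = (n - r) * (m - r) + (r * m + (n - r) * r)"
      unfolding d e by (simp add: algebra_simps)
    have h2: "(m - 1) * r + r = r * m" using assms(3) by (cases m) (auto simp: algebra_simps)
    show ?thesis using h1 h2 by linarith
  qed
  have Qe: "Q = ?q ^ (m * n)" unfolding Q_def using card_words by metis
  have VQ: "V \<le> Q" unfolding V_def Q_def by (rule ball0_le_words)
  have Vl: "?q ^ ?E' \<le> V" unfolding V_def by (rule card_ball0_lower[OF assms(1,2)])
  have q2: "2 \<le> ?q" by (rule card_ge2)
  define qr where "qr = real ?q"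
  have qr2: "2 \<le> qr" using q2 by (simp add: qr_def)
  define Qr where "Qr = real Q"
  define Vr where "Vr = real V"
  have Qr_pos: "0 < Qr" using Qe q2 by (simp add: Qr_def)
  have Qr_e: "Qr = qr ^ (m * n)" by (simp add: Qr_def qr_def Qe)
  have VQr: "Vr \<le> Qr" using VQ by (simp add: Vr_def Qr_def)
  have NV: "real ?N * Vr \<ge> Qr * (m * n * qr)"
  proof -
    have "Qr * (m * n * qr) = qr ^ ((n - r) * (m - r) + r) * qr ^ ?E' * (m * n * qr)"
      unfolding Qr_e by (subst mn) (simp add: power_add)
    also have "\<dots> \<le> qr ^ ((n - r) * (m - r) + r) * Vr * (m * n * qr)"
    proof -
      have "real (?q ^ ?E') \<le> real V" using Vl by (simp only: of_nat_le_iff)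
      then have "qr ^ ?E' \<le> Vr" by (simp add: qr_def Vr_def)
      then show ?thesis using qr2 by (intro mult_right_mono mult_left_mono) auto
    qed
    also have "\<dots> = real ?N * Vr" by (simp add: qr_def)
    finally show ?thesis .
  qed
  have "1 * 1 \<le> m * n" using assms(3,4) by (rule mult_le_mono)
  then have "real (1 * 1) \<le> real (m * n)" by (rule of_nat_mono)
  then have mnpos: "1 \<le> real (m * n)" by (simp only: mult_1 of_nat_1)
  have key: "Qr * exp (- (m * n * qr)) < 1"
  proof -
    have "Qr = exp (ln qr) ^ (m * n)" using Qr_e qr2 by simp
    also have "\<dots> = exp (real (m * n) * ln qr)" by (rule exp_of_nat_mult[symmetric])
    finally have "Qr = exp (real (m * n) * ln qr)" .
    then have "Qr * exp (- (m * n * qr)) = exp (real (m * n) * (ln qr - qr))"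
      by (simp add: exp_add[symmetric] algebra_simps)
    also have "\<dots> < 1"
    proof -
      have "ln qr < qr" using qr2 by simp
      then have "real (m * n) * (ln qr - qr) < 0" using mnpos by (simp add: mult_pos_neg)
      then show ?thesis by simp
    qed
    finally show ?thesis .
  qed
  have "real (Q * (Q - V) ^ ?N) = Qr * (Qr - Vr) ^ ?N"
    using VQ by (simp add: Qr_def Vr_def of_nat_diff)
  also have "\<dots> = Qr * (Qr ^ ?N * (1 - Vr / Qr) ^ ?N)"
  proof -
    have "Qr - Vr = Qr * (1 - Vr / Qr)" using Qr_pos by (simp add: field_simps)
    then show ?thesis by (simp add: power_mult_distrib)
  qed
  also have "\<dots> \<le> Qr * (Qr ^ ?N * exp (- (Vr / Qr)) ^ ?N)"
  proof -
    have "1 - Vr / Qr \<le> exp (- (Vr / Qr))" using exp_ge_add_one_self[of "- (Vr / Qr)"] by simp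
    moreover have "0 \<le> 1 - Vr / Qr" using VQr Qr_pos by (simp add: field_simps)
    ultimately have "(1 - Vr / Qr) ^ ?N \<le> exp (- (Vr / Qr)) ^ ?N" by (rule power_mono)
    then show ?thesis using Qr_pos by (intro mult_left_mono) auto
  qed
  also have "\<dots> = Qr ^ ?N * (Qr * exp (- (real ?N * Vr / Qr)))"
    by (simp add: exp_of_nat_mult[symmetric] algebra_simps)
  also have "\<dots> \<le> Qr ^ ?N * (Qr * exp (- (m * n * qr)))"
  proof -
    have "m * n * qr \<le> real ?N * Vr / Qr" using NV Qr_pos by (simp add: field_simps)
    then show ?thesis using Qr_pos by (intro mult_left_mono) auto
  qed
  also have "\<dots> < Qr ^ ?N" using key Qr_pos by simp
  also have "\<dots> = real (Q ^ ?N)" by (simp add: Qr_def)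
  finally have "Q * (Q - V) ^ ?N < Q ^ ?N" by (simp only: of_nat_less_iff)
  then obtain C :: "(nat \<Rightarrow> nat \<Rightarrow> 'a) set" where C: "C \<subseteq> words m n" "rank_covers m n C r" "card C \<le> ?N"
    using covering_exists[of m n r ?N, where 'a='a] unfolding Q_def V_def by blast
  show ?thesis by (rule K_R_upper_from_code[OF C])
qed



lemma K_exp_bounds:
  assumes "r \<le> n" "r \<le> m" "1 \<le> m" "1 \<le> n"
  shows "CARD('a::{field,finite}) ^ ((n - r) * (m - r)) \<le> K_R TYPE('a) m n r * CARD('a) ^ n
     \<and> K_R TYPE('a) m n r \<le> CARD('a) ^ ((n - r) * (m - r) + r + m + n + 1)"
proof
  show "CARD('a) ^ ((n - r) * (m - r)) \<le> K_R TYPE('a) m n r * CARD('a) ^ n"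
    by (rule K_lower_exp[OF assms(1,2)])
  let ?q = "CARD('a)"
  have q2: "2 \<le> ?q" by (rule card_ge2)
  have "m < 2 ^ m" by (rule less_exp)
  also have "\<dots> \<le> ?q ^ m" using q2 by (rule power_mono) simp
  finally have m: "m \<le> ?q ^ m" by simp
  have "n < 2 ^ n" by (rule less_exp)
  also have "\<dots> \<le> ?q ^ n" using q2 by (rule power_mono) simp
  finally have n: "n \<le> ?q ^ n" by simp
  have "m * n * ?q \<le> ?q ^ m * ?q ^ n * ?q" using m n by (intro mult_mono) auto
  also have "\<dots> = ?q ^ (m + n + 1)" by (simp add: power_add)
  finally have mn: "m * n * ?q \<le> ?q ^ (m + n + 1)" .
  have "K_R TYPE('a) m n r \<le> ?q ^ ((n - r) * (m - r) + r) * (m * n * ?q)"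
    by (rule K_upper_exp[OF assms])
  also have "\<dots> \<le> ?q ^ ((n - r) * (m - r) + r) * ?q ^ (m + n + 1)"
    using mn by simp
  also have "\<dots> = ?q ^ ((n - r) * (m - r) + r + m + n + 1)"
    by (simp add: power_add[symmetric] add.assoc)
  finally show "K_R TYPE('a) m n r \<le> ?q ^ ((n - r) * (m - r) + r + m + n + 1)" .
qed

lemma log_bounds:
  fixes K q m n a b :: nat
  assumes q2: "2 \<le> q" and m: "1 \<le> m" and n: "1 \<le> n"
    and lo: "q ^ a \<le> K * q ^ n" and hi: "K \<le> q ^ b"
  shows "(real a - real n) / (real m * real n) \<le> log (real q ^ m) (real K) / real n
     \<and> log (real q ^ m) (real K) / real n \<le> real b / (real m * real n)"
proof -
  define qr where "qr = real q"
  have qr2: "2 \<le> qr" using q2 by (simp add: qr_def)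
  have lq: "0 < ln qr" using qr2 by simp
  have K0: "0 < K"
  proof (rule ccontr)
    assume "\<not> 0 < K"
    then have "K = 0" by simp
    then have "q ^ a \<le> 0" using lo by simp
    then show False using q2 by simp
  qed
  define Kr where "Kr = real K"
  have Kr0: "0 < Kr" using K0 by (simp add: Kr_def)
  have lo_r: "qr ^ a \<le> Kr * qr ^ n"
  proof -
    have "real (q ^ a) \<le> real (K * q ^ n)" using lo by (rule of_nat_mono)
    then show ?thesis by (simp add: qr_def Kr_def)
  qed
  have hi_r: "Kr \<le> qr ^ b"
  proof -
    have "real K \<le> real (q ^ b)" using hi by (rule of_nat_mono)
    then show ?thesis by (simp add: qr_def Kr_def)
  qed
  have l1: "real a * ln qr \<le> ln Kr + real n * ln qr"
  proof -
    have "ln (qr ^ a) \<le> ln (Kr * qr ^ n)" using lo_r qr2 Kr0 by (subst ln_le_cancel_iff) auto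
    then show ?thesis using Kr0 qr2 by (simp add: ln_mult ln_realpow)
  qed
  have l2: "ln Kr \<le> real b * ln qr"
  proof -
    have "ln Kr \<le> ln (qr ^ b)" using hi_r qr2 Kr0 by (subst ln_le_cancel_iff) auto
    then show ?thesis using qr2 by (simp add: ln_realpow)
  qed
  have eq: "log (real q ^ m) (real K) / real n = ln Kr / (real m * real n * ln qr)"
    unfolding log_def using qr2 by (simp add: Kr_def qr_def ln_realpow field_simps)
  have D: "0 < real m * real n * ln qr" using m n lq by simp
  have "(real a - real n) / (real m * real n) = ((real a - real n) * ln qr) / (real m * real n * ln qr)"
    using lq by simp
  also have "\<dots> \<le> ln Kr / (real m * real n * ln qr)"
    using l1 D by (intro divide_right_mono) (auto simp: algebra_simps)
  finally have A: "(real a - real n) / (real m * real n) \<le> log (real q ^ m) (real K) / real n"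
    using eq by simp
  have "ln Kr / (real m * real n * ln qr) \<le> (real b * ln qr) / (real m * real n * ln qr)"
    using l2 D by (intro divide_right_mono) auto
  also have "\<dots> = real b / (real m * real n)" using lq by simp
  finally have B: "log (real q ^ m) (real K) / real n \<le> real b / (real m * real n)"
    using eq by simp
  show ?thesis using A B by simp
qed



theorem theorem1:
  fixes m \<rho> :: "nat \<Rightarrow> nat" and b r :: real
  assumes "b > 0"
    and "\<And>n. m n > 0"
    and "\<And>n. \<rho> n \<le> n" and "\<And>n. \<rho> n \<le> m n"
    and "(\<lambda>n. real n / real (m n)) \<longlonglongrightarrow> b"
    and "(\<lambda>n. real (\<rho> n) / real n) \<longlonglongrightarrow> r"
  shows "liminf (\<lambda>n. ereal (log (real CARD('a::{field,finite}) ^ m n)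
                                   (real (K_R TYPE('a) (m n) n (\<rho> n))) / real n))
         = ereal ((1 - r) * (1 - b * r))"
proof -
  let ?q = "CARD('a)"
  define f where "f = (\<lambda>n. log (real CARD('a) ^ m n) (real (K_R TYPE('a) (m n) n (\<rho> n))) / real n)"
  define a where "a = (\<lambda>n. (n - \<rho> n) * (m n - \<rho> n))"
  define L where "L = (\<lambda>n. (real (a n) - real n) / (real (m n) * real n))"
  define U where "U = (\<lambda>n. real (a n + \<rho> n + m n + n + 1) / (real (m n) * real n))"
  define x where "x = (\<lambda>n. real (\<rho> n) / real n)"
  define y where "y = (\<lambda>n. real n / real (m n))"
  define c where "c = (1 - r) * (1 - b * r)"
  have x: "x \<longlonglongrightarrow> r" using assms(6) by (simp add: x_def)
  have y: "y \<longlonglongrightarrow> b" using assms(5) by (simp add: y_def)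
  have inv_n: "(\<lambda>n. 1 / real n) \<longlonglongrightarrow> 0" by (rule lim_1_over_n)
  have ev1: "eventually (\<lambda>n. 1 \<le> n) sequentially" by simp
  have im: "(\<lambda>n. 1 / real (m n)) \<longlonglongrightarrow> 0"
  proof -
    have "(\<lambda>n. y n * (1 / real n)) \<longlonglongrightarrow> b * 0" by (intro tendsto_mult y inv_n)
    moreover have "eventually (\<lambda>n. y n * (1 / real n) = 1 / real (m n)) sequentially"
      using ev1 by eventually_elim (simp add: y_def)
    ultimately show ?thesis by (auto intro: Lim_transform_eventually)
  qed
  have main: "eventually (\<lambda>n. real (a n) / (real (m n) * real n) = (1 - x n) * (1 - x n * y n)) sequentially"
    using ev1
  proof eventually_elim
    case (elim n)
    have m0: "real (m n) \<noteq> 0" using assms(2)[of n] by simp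
    have n0: "real n \<noteq> 0" using elim by simp
    have "real (a n) = (real n - real (\<rho> n)) * (real (m n) - real (\<rho> n))"
      using assms(3,4)[of n] by (simp add: a_def of_nat_diff)
    then show ?case using m0 n0 by (simp add: x_def y_def field_simps)
  qed
  have A: "(\<lambda>n. real (a n) / (real (m n) * real n)) \<longlonglongrightarrow> c"
  proof -
    have "(\<lambda>n. (1 - x n) * (1 - x n * y n)) \<longlonglongrightarrow> (1 - r) * (1 - r * b)"
      by (intro tendsto_intros x y)
    then have "(\<lambda>n. (1 - x n) * (1 - x n * y n)) \<longlonglongrightarrow> c" by (simp add: c_def mult.commute)
    then show ?thesis using main by (auto intro: Lim_transform_eventually simp: eq_commute)
  qed
  have Llim: "L \<longlonglongrightarrow> c"
  proof -
    have "(\<lambda>n. real (a n) / (real (m n) * real n) - 1 / real (m n)) \<longlonglongrightarrow> c - 0"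
      by (intro tendsto_diff A im)
    moreover have "eventually (\<lambda>n. real (a n) / (real (m n) * real n) - 1 / real (m n) = L n) sequentially"
      using ev1
    proof eventually_elim
      case (elim n)
      have m0: "real (m n) \<noteq> 0" using assms(2)[of n] by simp
      have n0: "real n \<noteq> 0" using elim by simp
      show ?case using m0 n0 by (simp add: L_def field_simps)
    qed
    ultimately show ?thesis by (auto intro: Lim_transform_eventually)
  qed
  have Ulim: "U \<longlonglongrightarrow> c"
  proof -
    have "(\<lambda>n. real (a n) / (real (m n) * real n) + x n * (1 / real (m n)) + 1 / real n
             + 1 / real (m n) + (1 / real (m n)) * (1 / real n)) \<longlonglongrightarrow> c + r * 0 + 0 + 0 + 0 * 0"
      by (intro tendsto_add tendsto_mult A x im inv_n)
    moreover have "eventually (\<lambda>n. real (a n) / (real (m n) * real n) + x n * (1 / real (m n)) + 1 / real n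
             + 1 / real (m n) + (1 / real (m n)) * (1 / real n) = U n) sequentially"
      using ev1
    proof eventually_elim
      case (elim n)
      have m0: "real (m n) \<noteq> 0" using assms(2)[of n] by simp
      have n0: "real n \<noteq> 0" using elim by simp
      show ?case using m0 n0 by (simp add: U_def x_def field_simps)
    qed
    ultimately show ?thesis by (auto intro: Lim_transform_eventually)
  qed
  have bounds: "eventually (\<lambda>n. L n \<le> f n \<and> f n \<le> U n) sequentially"
    using ev1
  proof eventually_elim
    case (elim n)
    have m1: "1 \<le> m n" using assms(2)[of n] by simp
    note KB = K_exp_bounds[OF assms(3)[of n] assms(4)[of n] m1 elim, where 'a='a]
    have "(real (a n) - real n) / (real (m n) * real n) \<le> f n \<and> f n \<le> real (a n + \<rho> n + m n + n + 1) / (real (m n) * real n)"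
      unfolding f_def
      by (rule log_bounds[OF card_ge2[where 'a='a] m1 elim]) (use KB in \<open>simp_all add: a_def\<close>)
    then show ?case by (simp add: L_def U_def)
  qed
  have "f \<longlonglongrightarrow> c"
    by (rule tendsto_sandwich[OF _ _ Llim Ulim]) (use bounds in \<open>auto elim: eventually_mono\<close>)
  then have "(\<lambda>n. ereal (f n)) \<longlonglongrightarrow> ereal c" by (rule tendsto_ereal)
  then have "liminf (\<lambda>n. ereal (f n)) = ereal c" by (rule lim_imp_Liminf[rotated]) simp
  then show ?thesis by (simp add: f_def c_def)
qed


end
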